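(* Let $b_1,\dots,b_n$ be positive integers and $N=b_1+\dots+b_n$. Then the initial complex is the disjoint union of intervals $$\Delta_\prec=\bigsqcup_{u\in\mathcal S}[\mathcal G_u,\mathcal F_u],$$ where $[\mathcal G,\mathcal F]=\{H\in\Delta_\prec\mid \mathcal G\subseteq H\subseteq\mathcal F\}$. Consequently the Hilbert–Poincaré series of $R_{[\mathbf b]}$ is $$P_{R_{[\mathbf b]}}(t)=\frac{A_{[\mathbf b]}(t)}{(1-t)^{N+1}},\qquad A_{[\mathbf b]}(t)=\sum_{u\in\mathcal S}t^{\mathrm{desc}(u)}=\sum_kA([\mathbf b],k)t^k,$$ i.e. the $k$-th entry of the $h$-vector of $R_{[\mathbf b]}$ equals the Simon Newcomb number $A([\mathbf b],k)$.
   Context: Let $K$ be a field, $\mathcal M=\{0,\dots,b_1\}\times\dots\times\{0,\dots,b_n\}\subset\mathbb N^n$ with the componentwise partial order, $S=K[T_v\mid v\in\mathcal M]$ standard graded, $\mathcal J_{[\mathbf b]}=\ker(T_v\mapsto x_{1,v_1}\cdots x_{n,v_n})$, $R_{[\mathbf b]}=S/\mathcal J_{[\mathbf b]}$. $\prec$ is the reverse lexicographic order with respect to a linear extension of the componentwise order on the variables, and $\Delta_\prec$ is the simplicial complex on $\mathcal M$ whose Stanley–Reisner ideal is $\mathrm{in}_\prec(\mathcal J_{[\mathbf b]})$; its faces are the chains of $\mathcal M$. Let $\mathcal S$ be the set of words $u=u_1u_2\cdots u_N$ over $\{1,\dots,n\}$ containing the letter $i$ exactly $b_i$ times. A descent of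 $u$ is an index $1\le m\le N-1$ with $u_m>u_{m+1}$; $\mathrm{desc}(u)$ is the number of descents, and the Simon Newcomb number $A([\mathbf b],k)$ is the number of $u\in\mathcal S$ with exactly $k$ descents. With $\varepsilon_1,\dots,\varepsilon_n$ the standard basis of $\mathbb Z^n$, put $p_m(u)=\sum_{i=1}^m\varepsilon_{u_i}$ for $0\le m\le N$, $\mathcal F_u=\{p_0(u),\dots,p_N(u)\}$ (a maximal chain of $\mathcal M$; $u\mapsto\mathcal F_u$ is a bijection from $\mathcal S$ to the facets of $\Delta_\prec$) and $\mathcal G_u=\{p_m(u)\mid 1\le m\le N-1,\ u_m>u_{m+1}\}$ (the descent set). *)

theory Defs
  imports "HOL-Library.Poly_Mapping" "HOL-Computational_Algebra.Computational_Algebra"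
begin

(* Indexing convention: the letters / coordinates 1..n of the paper are 0..n-1 here;
   b = [b_1,...,b_n] is a list, n = length b. *)

definition box :: "nat list \<Rightarrow> nat list set" where
  "box b = {v. length v = length b \<and> (\<forall>i<length b. v ! i \<le> b ! i)}"

definition cle :: "nat list \<Rightarrow> nat list \<Rightarrow> nat list \<Rightarrow> bool" where
  "cle b v w \<longleftrightarrow> (\<forall>i<length b. v ! i \<le> w ! i)"

(* the faces of the initial complex Delta_prec: the chains of M (incl. the empty face) *)
definition init_complex :: "nat list \<Rightarrow> nat list set set" where
  "init_complex b = {H. H \<subseteq> box b \<and> (\<forall>v\<in>H. \<forall>w\<in>H. cle b v w \<or> cle b w v)}"

definition words :: "nat list \<Rightarrow> nat list set" where
  "words b = {u. length u = sum_list b \<and> set u \<subseteq> {..<length b}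
                 \<and> (\<forall>i<length b. count_list u i = b ! i)}"

definition pt :: "nat list \<Rightarrow> nat list \<Rightarrow> nat \<Rightarrow> nat list" where
  "pt b u m = map (\<lambda>i. count_list (take m u) i) [0..<length b]"

definition Fu :: "nat list \<Rightarrow> nat list \<Rightarrow> nat list set" where
  "Fu b u = pt b u ` {0..length u}"

(* descent at paper-position m (1-based) = 0-based index j = m-1 *)
definition Gu :: "nat list \<Rightarrow> nat list \<Rightarrow> nat list set" where
  "Gu b u = {pt b u (Suc j) | j. Suc j < length u \<and> u ! (Suc j) < u ! j}"

definition desc :: "nat list \<Rightarrow> nat" where
  "desc u = card {j. Suc j < length u \<and> u ! (Suc j) < u ! j}"

definition face_interval :: "nat list \<Rightarrow> nat list set \<Rightarrow> nat list set \<Rightarrow> nat list set set" where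
  "face_interval b G F = {H \<in> init_complex b. G \<subseteq> H \<and> H \<subseteq> F}"

definition newcomb :: "nat list \<Rightarrow> nat \<Rightarrow> nat" where
  "newcomb b k = card {u \<in> words b. desc u = k}"

definition A_poly :: "nat list \<Rightarrow> rat poly" where
  "A_poly b = (\<Sum>u\<in>words b. monom 1 (desc u))"

(* Polynomials: S = K[T_v | v in M] as finitely supported maps from monomials
   (nat list \<Rightarrow>\<^sub>0 nat, exponent vectors on the variables T_v) to K;
   target ring K[x_{i,j}] with variables indexed by nat \<times> nat. *)

definition pm_scale :: "'k::field \<Rightarrow> ('m \<Rightarrow>\<^sub>0 'k) \<Rightarrow> ('m \<Rightarrow>\<^sub>0 'k)" where
  "pm_scale c p = Poly_Mapping.map (\<lambda>x. c * x) p"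

(* image of the monomial T^alpha under T_v \<mapsto> x_{1,v_1} ... x_{n,v_n} *)
definition xmonom :: "(nat list \<Rightarrow>\<^sub>0 nat) \<Rightarrow> ((nat \<times> nat) \<Rightarrow>\<^sub>0 nat)" where
  "xmonom \<alpha> = (\<Sum>v\<in>Poly_Mapping.keys \<alpha>. \<Sum>i<length v. Poly_Mapping.single (i, v ! i) (Poly_Mapping.lookup \<alpha> v))"

definition phi :: "((nat list \<Rightarrow>\<^sub>0 nat) \<Rightarrow>\<^sub>0 'k::field) \<Rightarrow> (((nat \<times> nat) \<Rightarrow>\<^sub>0 nat) \<Rightarrow>\<^sub>0 'k)" where
  "phi p = (\<Sum>\<alpha>\<in>Poly_Mapping.keys p. Poly_Mapping.single (xmonom \<alpha>) (Poly_Mapping.lookup p \<alpha>))"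

definition S_ring :: "nat list \<Rightarrow> ((nat list \<Rightarrow>\<^sub>0 nat) \<Rightarrow>\<^sub>0 'k::field) set" where
  "S_ring b = {p. \<forall>\<alpha>\<in>Poly_Mapping.keys p. Poly_Mapping.keys \<alpha> \<subseteq> box b}"

definition S_deg :: "nat list \<Rightarrow> nat \<Rightarrow> ((nat list \<Rightarrow>\<^sub>0 nat) \<Rightarrow>\<^sub>0 'k::field) set" where
  "S_deg b d = {p \<in> S_ring b. \<forall>\<alpha>\<in>Poly_Mapping.keys p. (\<Sum>v\<in>Poly_Mapping.keys \<alpha>. Poly_Mapping.lookup \<alpha> v) = d}"

definition J_ideal :: "nat list \<Rightarrow> ((nat list \<Rightarrow>\<^sub>0 nat) \<Rightarrow>\<^sub>0 'k::field) set" where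
  "J_ideal b = {p \<in> S_ring b. phi p = 0}"

(* Hilbert function of R = S/J: dim_K R_d = dim_K S_d - dim_K J_d *)
definition hilbert_fun :: "'k::field itself \<Rightarrow> nat list \<Rightarrow> nat \<Rightarrow> nat" where
  "hilbert_fun _ b d =
     vector_space.dim (pm_scale :: 'k \<Rightarrow> _) (S_deg b d :: ((nat list \<Rightarrow>\<^sub>0 nat) \<Rightarrow>\<^sub>0 'k) set)
   - vector_space.dim (pm_scale :: 'k \<Rightarrow> _) (S_deg b d \<inter> J_ideal b :: ((nat list \<Rightarrow>\<^sub>0 nat) \<Rightarrow>\<^sub>0 'k) set)"

definition hilbert_series :: "'k::field itself \<Rightarrow> nat list \<Rightarrow> rat fps" where
  "hilbert_series K b = Abs_fps (\<lambda>d. of_nat (hilbert_fun K b d))"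

end

theory Submission
  imports Defs
begin


lemma length_pt[simp]: "length (pt b u m) = length b"
  by (simp add: pt_def)

lemma pt_nth[simp]: "i < length b \<Longrightarrow> pt b u m ! i = count_list (take m u) i"
  by (simp add: pt_def)

lemma sum_count_list: "set (xs::nat list) \<subseteq> {..<n} \<Longrightarrow> (\<Sum>i<n. count_list xs i) = length xs"
proof (induction xs)
  case Nil then show ?case by simp
next
  case (Cons x xs)
  have xn: "x < n" using Cons.prems by auto
  have d: "(\<Sum>i<n. (if i = x then 1 else 0)) = (1::nat)" using xn by (subst sum.delta) auto
  have "(\<Sum>i<n. count_list (x#xs) i) = (\<Sum>i<n. count_list xs i + (if i = x then 1 else 0))"
    by (intro sum.cong) auto
  also have "\<dots> = (\<Sum>i<n. count_list xs i) + (\<Sum>i<n. (if i = x then 1 else 0))"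
    by (rule sum.distrib)
  also have "\<dots> = length xs + 1" using Cons d by simp
  finally show ?case by simp
qed

lemma sum_list_map_upt: "sum_list (map f [0..<n]) = (\<Sum>i<n. f i)"
  using interv_sum_list_conv_sum_set_nat[of f 0 n] by (simp add: atLeast0LessThan)

lemma sum_list_as_sum: "sum_list c = (\<Sum>i<length c. c ! i)"
  using sum_list_sum_nth[of c] atLeast0LessThan by metis

lemma sum_pt: "set u \<subseteq> {..<length b} \<Longrightarrow> sum_list (pt b u m) = min m (length u)"
proof -
  assume a: "set u \<subseteq> {..<length b}"
  have "set (take m u) \<subseteq> {..<length b}" using a set_take_subset by (metis order_trans)
  then show ?thesis unfolding pt_def sum_list_map_upt by (simp add: sum_count_list)
qed

lemma words_length: "u \<in> words c \<Longrightarrow> length u = sum_list c"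
  unfolding words_def by blast

lemma words_set: "u \<in> words c \<Longrightarrow> set u \<subseteq> {..<length c}"
  unfolding words_def by blast

lemma words_count: "u \<in> words c \<Longrightarrow> i < length c \<Longrightarrow> count_list u i = c ! i"
  unfolding words_def by blast

lemma pt_full: "u \<in> words c \<Longrightarrow> length c = length b \<Longrightarrow> pt b u (length u) = c"
proof (rule nth_equalityI)
  assume u: "u \<in> words c" and l: "length c = length b"
  show "length (pt b u (length u)) = length c" using l by simp
  fix i assume "i < length (pt b u (length u))"
  then show "pt b u (length u) ! i = c ! i" using words_count[OF u] l by simp
qed

lemma pt_take: "m \<le> length w \<Longrightarrow> pt b (w @ s) m = pt b w m"
  by (simp add: pt_def)

lemma key_unique:
  assumes u: "u \<in> words b" and u': "u' \<in> words b"
  and H: "H \<subseteq> Fu b u" and G': "Gu b u' \<subseteq> H"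
  and k: "k < length u" and tk: "take k u = take k u'" and lt: "u!k < u'!k"
  shows False
proof -
  define N where "N = length u"
  have lu': "length u' = N" using u u' by (simp add: N_def words_length)
  define P where "P m \<longleftrightarrow> k < m \<and> (m = N \<or> pt b u' m \<in> H)" for m
  define m where "m = (LEAST m. P m)"
  have "P N" using k by (simp add: P_def N_def)
  hence Pm: "P m" unfolding m_def by (rule LeastI)
  have mN: "m \<le> N" unfolding m_def using \<open>P N\<close> by (rule Least_le)
  have km: "k < m" using Pm P_def by blast
  have minm: "pt b u' j \<notin> H" if "k < j" "j < m" for j
  proof
    assume "pt b u' j \<in> H"
    hence "P j" using that by (simp add: P_def)
    hence "m \<le> j" unfolding m_def by (rule Least_le)
    thus False using that by simp
  qed
  have pteq: "pt b u m = pt b u' m"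
  proof (cases "m = N")
    case True
    then show ?thesis using pt_full[OF u refl] pt_full[OF u' refl] lu' N_def by simp
  next
    case False
    hence "pt b u' m \<in> H" using Pm P_def by blast
    with H obtain m'' where m'': "m'' \<in> {0..length u}" "pt b u' m = pt b u m''"
      unfolding Fu_def by blast
    have "sum_list (pt b u' m) = m" using sum_pt[OF words_set[OF u']] mN lu' by simp
    moreover have "sum_list (pt b u m'') = m''" using sum_pt[OF words_set[OF u]] m'' by simp
    ultimately show ?thesis using m'' by simp
  qed
  have mono: "j < m \<longrightarrow> u'!k \<le> u'!j" if "k \<le> j" for j
    using that
  proof (induction j rule: dec_induct)
    case base then show ?case by simp
  next
    case (step n)
    show ?case
    proof
      assume sn: "Suc n < m"
      have "\<not> u'!(Suc n) < u'!n"
      proof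
        assume d: "u'!(Suc n) < u'!n"
        have "Suc n < length u'" using sn mN lu' by simp
        hence "pt b u' (Suc n) \<in> Gu b u'" using d unfolding Gu_def by blast
        hence "pt b u' (Suc n) \<in> H" using G' by blast
        thus False using minm[of "Suc n"] step sn by simp
      qed
      thus "u'!k \<le> u'!Suc n" using step sn by simp
    qed
  qed
  define a where "a = u!k"
  have notin: "a \<notin> set (take (m - k) (drop k u'))"
  proof
    assume "a \<in> set (take (m - k) (drop k u'))"
    then obtain i where i: "i < length (take (m - k) (drop k u'))" "take (m - k) (drop k u') ! i = a"
      by (auto simp: in_set_conv_nth)
    have "i < m - k" "k + i < length u'" using i(1) by auto
    hence "take (m - k) (drop k u') ! i = u' ! (k + i)" by simp
    moreover have "u'!k \<le> u'!(k+i)" using mono[of "k+i"] \<open>i < m - k\<close> by simp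
    ultimately show False using i(2) lt a_def by simp
  qed
  have "take m u' = take k u' @ take (m - k) (drop k u')"
    using km take_add[of k "m - k" u'] by simp
  hence c1: "count_list (take m u') a = count_list (take k u') a"
    using notin by (simp add: count_list_0_iff)
  have "take m u = take (Suc k) u @ take (m - Suc k) (drop (Suc k) u)"
    using km take_add[of "Suc k" "m - Suc k" u] by simp
  moreover have "take (Suc k) u = take k u @ [a]" using k a_def by (simp add: take_Suc_conv_app_nth)
  ultimately have c2: "count_list (take m u) a \<ge> count_list (take k u) a + 1"
    by simp
  have "a < length b" using words_set[OF u] k a_def by (meson lessThan_iff nth_mem subsetD)
  hence "count_list (take m u) a = count_list (take m u') a"
    using pteq pt_nth by metis
  thus False using c1 c2 tk by simp
qed

lemma words_unique:
  assumes u: "u \<in> words b" and u': "u' \<in> words b"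
  and H: "H \<subseteq> Fu b u" "H \<subseteq> Fu b u'" and G: "Gu b u \<subseteq> H" "Gu b u' \<subseteq> H"
  shows "u = u'"
proof (rule ccontr)
  assume ne: "u \<noteq> u'"
  have len: "length u = length u'" using u u' by (simp add: words_length)
  have "\<exists>k. k < length u \<and> u!k \<noteq> u'!k" using ne len nth_equalityI by metis
  define k where "k = (LEAST k. k < length u \<and> u!k \<noteq> u'!k)"
  have k: "k < length u" "u!k \<noteq> u'!k" using LeastI_ex[OF \<open>\<exists>k. _\<close>] unfolding k_def by auto
  have "take k u = take k u'"
  proof (rule nth_equalityI)
    show "length (take k u) = length (take k u')" using len by simp
    fix j assume "j < length (take k u)"
    hence "j < k" "j < length u" by auto
    hence "u!j = u'!j" using not_less_Least[of j "\<lambda>k. k < length u \<and> u!k \<noteq> u'!k"] k_def by auto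
    thus "take k u ! j = take k u' ! j" using \<open>j < k\<close> by simp
  qed
  show False
  proof (cases "u!k < u'!k")
    case True
    show False by (rule key_unique[OF u u' H(1) G(2) k(1) \<open>take k u = take k u'\<close> True])
  next
    case False
    hence "u'!k < u!k" using k(2) by simp
    show False by (rule key_unique[OF u' u H(2) G(1) _ _ \<open>u'!k < u!k\<close>])
       (use k(1) len \<open>take k u = take k u'\<close> in auto)
  qed
qed


definition sw :: "nat list \<Rightarrow> nat list" where
  "sw c = concat (map (\<lambda>i. replicate (c!i) i) [0..<length c])"

lemma count_list_replicate: "count_list (replicate k x) y = (if x = y then k else 0)"
  by (induction k) auto

lemma count_sw_gen: "count_list (concat (map (\<lambda>i. replicate (f i) i) [0..<n])) j = (if j < n then f j else 0)"
  by (induction n) (auto simp: count_list_replicate)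

lemma set_sw_gen: "set (concat (map (\<lambda>i. replicate (f i) i) [0..<n])) \<subseteq> {..<n}"
  by (induction n) auto

lemma sorted_sw_gen: "sorted (concat (map (\<lambda>i. replicate (f i) (i::nat)) [0..<n]))"
proof (induction n)
  case 0 then show ?case by simp
next
  case (Suc n)
  have "set (concat (map (\<lambda>i. replicate (f i) i) [0..<n])) \<subseteq> {..<n}" by (rule set_sw_gen)
  then show ?case using Suc by (auto simp: sorted_append)
qed

lemma length_from_counts: "set (u::nat list) \<subseteq> {..<n} \<Longrightarrow> length u = (\<Sum>i<n. count_list u i)"
  using sum_count_list by simp

lemma words_intro:
  assumes "set u \<subseteq> {..<length c}" "\<And>i. i < length c \<Longrightarrow> count_list u i = c ! i"
  shows "u \<in> words c"
proof -
  have "length u = (\<Sum>i<length c. count_list u i)" using assms(1) length_from_counts by blast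
  also have "\<dots> = (\<Sum>i<length c. c ! i)" using assms(2) by simp
  also have "\<dots> = sum_list c" using sum_list_as_sum[of c] by simp
  finally show ?thesis using assms unfolding words_def by blast
qed

lemma sw_words: "sw c \<in> words c"
  by (rule words_intro) (auto simp: sw_def count_sw_gen set_sw_gen)

lemma sorted_sw: "sorted (sw c)"
  unfolding sw_def by (rule sorted_sw_gen)

lemma finite_box: "finite (box c)"
proof -
  have "box c \<subseteq> {xs. set xs \<subseteq> {0..sum_list c} \<and> length xs = length c}"
  proof
    fix v assume v: "v \<in> box c"
    have "\<forall>x\<in>set v. x \<le> sum_list c"
    proof
      fix x assume "x \<in> set v"
      then obtain i where i: "i < length v" "v ! i = x" by (auto simp: in_set_conv_nth)
      have "length v = length c" using v by (simp add: box_def)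
      hence "v ! i \<le> c ! i" using v i unfolding box_def by auto
      also have "c ! i \<le> sum_list c" using i \<open>length v = length c\<close> by (simp add: elem_le_sum_list)
      finally show "x \<le> sum_list c" using i by simp
    qed
    then show "v \<in> {xs. set xs \<subseteq> {0..sum_list c} \<and> length xs = length c}"
      using v by (auto simp: box_def)
  qed
  moreover have "finite {xs. set xs \<subseteq> {0..sum_list c} \<and> length xs = length c}"
    by (rule finite_lists_length_eq) simp
  ultimately show ?thesis by (rule finite_subset)
qed

lemma sum_le_strict:
  fixes v w :: "nat list"
  assumes "length v = length w" "\<forall>i<length v. v!i \<le> w!i" "v \<noteq> w"
  shows "sum_list v < sum_list w"
proof -
  obtain i where i: "i < length v" "v!i \<noteq> w!i" using assms nth_equalityI by metis
  have "(\<Sum>i<length v. v!i) < (\<Sum>i<length v. w!i)"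
    by (rule sum_strict_mono_ex1) (use assms i in \<open>auto intro!: bexI[of _ i]\<close>)
  then show ?thesis using sum_list_as_sum[of v] sum_list_as_sum[of w] assms(1) by simp
qed

lemma sum_le:
  fixes v w :: "nat list"
  assumes "length v = length w" "\<forall>i<length v. v!i \<le> w!i"
  shows "sum_list v \<le> sum_list w"
  using sum_le_strict[OF assms] by (cases "v = w") (auto simp: less_imp_le)

lemma no_desc_sorted: "sorted s \<Longrightarrow> Suc j < length s \<Longrightarrow> \<not> s ! Suc j < s ! j"
  using sorted_nth_mono[of s j "Suc j"] by simp

lemma exists_word:
  "length c = length b \<Longrightarrow> H \<subseteq> box c \<Longrightarrow> (\<forall>v\<in>H. \<forall>w\<in>H. cle b v w \<or> cle b w v)
   \<Longrightarrow> \<exists>u\<in>words c. H \<subseteq> Fu b u \<and> Gu b u \<subseteq> H"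
proof (induction "sum_list c" arbitrary: c H rule: less_induct)
  case less
  note lc = less.prems(1) and Hbox = less.prems(2) and chain = less.prems(3)
  define H' where "H' = H - {c}"
  show ?case
  proof (cases "H' = {}")
    case True
    define u where "u = sw c"
    have u: "u \<in> words c" unfolding u_def by (rule sw_words)
    have "c \<in> Fu b u" unfolding Fu_def using pt_full[OF u lc] by force
    hence "H \<subseteq> Fu b u" using True H'_def by blast
    moreover have "Gu b u = {}" unfolding Gu_def u_def using no_desc_sorted[OF sorted_sw] by blast
    ultimately show ?thesis using u by blast
  next
    case False
    have finH': "finite H'" using finite_subset[OF Hbox finite_box] H'_def by blast
    define s where "s = Max (sum_list ` H')"
    have "s \<in> sum_list ` H'" unfolding s_def using finH' False by (intro Max_in) auto
    then obtain h where h: "h \<in> H'" "sum_list h = s" by blast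
    have smax: "sum_list w \<le> sum_list h" if "w \<in> H'" for w
      using h(2) that finH' unfolding s_def by simp
    have lenH: "length w = length b" if "w \<in> H" for w using that Hbox lc by (auto simp: box_def)
    have hH: "h \<in> H" "h \<noteq> c" using h(1) H'_def by auto
    have below: "cle b w h" if "w \<in> H'" for w
    proof -
      have wH: "w \<in> H" using that H'_def by blast
      show ?thesis
      proof (cases "cle b h w")
        case True
        have "h = w"
        proof (rule ccontr)
          assume "h \<noteq> w"
          hence "sum_list h < sum_list w" using True lenH[OF wH] lenH[OF hH(1)]
            by (intro sum_le_strict) (auto simp: cle_def)
          thus False using smax[OF that] by simp
        qed
        thus ?thesis by (simp add: cle_def)
      next
        case False
        thus ?thesis using chain wH hH(1) by blast
      qed
    qed
    have hbox: "h \<in> box c" using hH Hbox by blast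
    have lh: "length h = length b" using lenH hH by blast
    have hc: "\<forall>i<length h. h!i \<le> c!i" using hbox by (simp add: box_def)
    have "sum_list h < sum_list c" using sum_le_strict[of h c] hc hH(2) lh lc by simp
    moreover have "H' \<subseteq> box h"
    proof
      fix w assume w: "w \<in> H'"
      hence "length w = length b" using lenH H'_def by blast
      thus "w \<in> box h" using below[OF w] lh by (simp add: box_def cle_def)
    qed
    moreover have "\<forall>v\<in>H'. \<forall>w\<in>H'. cle b v w \<or> cle b w v" using chain H'_def by blast
    ultimately obtain w where w: "w \<in> words h" "H' \<subseteq> Fu b w" "Gu b w \<subseteq> H'"
      using less.hyps[of h H'] lh by blast
    define dv where "dv = map (\<lambda>i. c!i - h!i) [0..<length b]"
    define u where "u = w @ sw dv"
    have ldv: "length dv = length b" by (simp add: dv_def)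
    have u: "u \<in> words c"
    proof (rule words_intro)
      show "set u \<subseteq> {..<length c}" unfolding u_def using words_set[OF w(1)] words_set[OF sw_words[of dv]]
        lh lc ldv by auto
      fix i assume i: "i < length c"
      have "count_list u i = count_list w i + count_list (sw dv) i" by (simp add: u_def)
      also have "\<dots> = h!i + dv!i" using words_count[OF w(1)] words_count[OF sw_words[of dv]] i lh lc ldv
        by simp
      also have "\<dots> = c!i" using hc i lh lc by (simp add: dv_def)
      finally show "count_list u i = c ! i" .
    qed
    have ptu: "pt b u m = pt b w m" if "m \<le> length w" for m
      unfolding u_def using that by (rule pt_take)
    have Fsub: "Fu b w \<subseteq> Fu b u"
    proof
      fix x assume "x \<in> Fu b w"
      then obtain m where "m \<le> length w" "x = pt b w m" unfolding Fu_def by auto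
      moreover have "m \<le> length u" using \<open>m \<le> length w\<close> by (simp add: u_def)
      ultimately show "x \<in> Fu b u" unfolding Fu_def using ptu[of m] by (intro image_eqI[of _ _ m]) auto
    qed
    have "c \<in> Fu b u" unfolding Fu_def using pt_full[OF u lc] by force
    hence HF: "H \<subseteq> Fu b u" using w(2) Fsub H'_def by blast
    have "Gu b u \<subseteq> H"
    proof
      fix x assume "x \<in> Gu b u"
      then obtain j where j: "x = pt b u (Suc j)" "Suc j < length u" "u ! Suc j < u ! j"
        unfolding Gu_def by blast
      consider "Suc j < length w" | "Suc j = length w" | "Suc j > length w" by linarith
      then show "x \<in> H"
      proof cases
        case 1
        hence "w ! Suc j < w ! j" using j(3) by (simp add: u_def nth_append)
        hence "pt b w (Suc j) \<in> Gu b w" unfolding Gu_def using 1 by blast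
        thus ?thesis using j(1) ptu[of "Suc j"] 1 w(3) H'_def by auto
      next
        case 2
        hence "x = h" using j(1) ptu[of "Suc j"] pt_full[OF w(1) lh] by simp
        thus ?thesis using hH by simp
      next
        case 3
        define j' where "j' = j - length w"
        have "u ! j = sw dv ! j'" "u ! Suc j = sw dv ! Suc j'" "Suc j' < length (sw dv)"
          using 3 j(2) by (auto simp: u_def nth_append j'_def Suc_diff_le)
        thus ?thesis using no_desc_sorted[OF sorted_sw] j(3) by metis
      qed
    qed
    then show ?thesis using u HF by blast
  qed
qed

lemma part1: "init_complex b = (\<Union>u\<in>words b. face_interval b (Gu b u) (Fu b u))"
proof
  show "init_complex b \<subseteq> (\<Union>u\<in>words b. face_interval b (Gu b u) (Fu b u))"
  proof
    fix H assume H: "H \<in> init_complex b"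
    then obtain u where "u \<in> words b" "H \<subseteq> Fu b u" "Gu b u \<subseteq> H"
      using exists_word[of b b H] unfolding init_complex_def by blast
    then show "H \<in> (\<Union>u\<in>words b. face_interval b (Gu b u) (Fu b u))"
      using H unfolding face_interval_def by blast
  qed
  show "(\<Union>u\<in>words b. face_interval b (Gu b u) (Fu b u)) \<subseteq> init_complex b"
    unfolding face_interval_def by blast
qed

lemma part2: "\<forall>u\<in>words b. \<forall>u'\<in>words b. u \<noteq> u' \<longrightarrow>
          face_interval b (Gu b u) (Fu b u) \<inter> face_interval b (Gu b u') (Fu b u') = {}"
  unfolding face_interval_def using words_unique by blast



lemma sum_pt_le: "set u \<subseteq> {..<length b} \<Longrightarrow> m \<le> length u \<Longrightarrow> sum_list (pt b u m) = m"
  using sum_pt by simp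

lemma card_Fu: assumes u: "u \<in> words b" shows "card (Fu b u) = sum_list b + 1"
proof -
  have "inj_on (pt b u) {0..length u}"
  proof
    fix x y assume xy: "x \<in> {0..length u}" "y \<in> {0..length u}" "pt b u x = pt b u y"
    have "sum_list (pt b u x) = x" "sum_list (pt b u y) = y"
      using sum_pt_le[OF words_set[OF u], of x] sum_pt_le[OF words_set[OF u], of y] xy(1,2) by auto
    then show "x = y" using \<open>pt b u x = pt b u y\<close> by metis
  qed
  then show ?thesis unfolding Fu_def using words_length[OF u] by (simp add: card_image)
qed

lemma card_Gu: assumes u: "u \<in> words b" shows "card (Gu b u) = desc u"
proof -
  have "Gu b u = (\<lambda>j. pt b u (Suc j)) ` {j. Suc j < length u \<and> u ! (Suc j) < u ! j}"
    unfolding Gu_def by blast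
  moreover have "inj_on (\<lambda>j. pt b u (Suc j)) {j. Suc j < length u \<and> u ! (Suc j) < u ! j}"
  proof
    fix x y assume xy: "x \<in> {j. Suc j < length u \<and> u ! (Suc j) < u ! j}" "y \<in> {j. Suc j < length u \<and> u ! (Suc j) < u ! j}"
      "pt b u (Suc x) = pt b u (Suc y)"
    have "Suc x \<le> length u" "Suc y \<le> length u" using xy(1,2) by auto
    then have "sum_list (pt b u (Suc x)) = Suc x" "sum_list (pt b u (Suc y)) = Suc y"
      using sum_pt_le[OF words_set[OF u], of "Suc x"] sum_pt_le[OF words_set[OF u], of "Suc y"] by auto
    then show "x = y" using \<open>pt b u (Suc x) = pt b u (Suc y)\<close> by (metis Suc_inject)
  qed
  ultimately show ?thesis unfolding desc_def by (simp add: card_image)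
qed

lemma count_take_le: "count_list (take m u) i \<le> count_list (take m' u) i" if "m \<le> m'"
proof -
  have "take m' u = take m u @ take (m' - m) (drop m u)" using that take_add[of m "m' - m" u] by simp
  then show ?thesis by (metis count_list_append le_add1)
qed

lemma Fu_complex: assumes u: "u \<in> words b" shows "Fu b u \<in> init_complex b"
proof -
  have box: "pt b u m \<in> box b" for m
  proof -
    have "count_list (take m u) i \<le> b ! i" if "i < length b" for i
    proof -
      have "count_list u i = count_list (take m u) i + count_list (drop m u) i"
        by (metis append_take_drop_id count_list_append)
      then show ?thesis using words_count[OF u that] by linarith
    qed
    then show ?thesis unfolding box_def by (simp add: pt_def)
  qed
  have ch: "cle b (pt b u m) (pt b u m') \<or> cle b (pt b u m') (pt b u m)" for m m'
  proof (cases "m \<le> m'")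
    case True
    hence "cle b (pt b u m) (pt b u m')" unfolding cle_def using count_take_le[of m m' u] by simp
    thus ?thesis ..
  next
    case False
    hence "cle b (pt b u m') (pt b u m)" unfolding cle_def using count_take_le[of m' m u] by simp
    thus ?thesis ..
  qed
  have s1: "Fu b u \<subseteq> box b" unfolding Fu_def using box by blast
  have s2: "\<forall>v\<in>Fu b u. \<forall>w\<in>Fu b u. cle b v w \<or> cle b w v"
  proof (intro ballI)
    fix v w assume "v \<in> Fu b u" "w \<in> Fu b u"
    then obtain m m' where "v = pt b u m" "w = pt b u m'" unfolding Fu_def by blast
    thus "cle b v w \<or> cle b w v" using ch by simp
  qed
  show ?thesis unfolding init_complex_def using s1 s2 by blast
qed

lemma complex_subset: "F \<in> init_complex b \<Longrightarrow> H \<subseteq> F \<Longrightarrow> H \<in> init_complex b"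
  unfolding init_complex_def by blast

lemma finite_words: "finite (words c)"
proof -
  have "words c \<subseteq> {xs. set xs \<subseteq> {..<length c} \<and> length xs = sum_list c}"
    unfolding words_def by blast
  moreover have "finite {xs. set xs \<subseteq> {..<length c} \<and> length xs = sum_list c}"
    by (rule finite_lists_length_eq) simp
  ultimately show ?thesis by (rule finite_subset)
qed

lemma card_ms_interval:
  assumes F: "finite F" and GF: "G \<subseteq> F"
  shows "card {M. size M = d \<and> G \<subseteq> set_mset M \<and> set_mset M \<subseteq> F} =
     (if card G \<le> d then (card F + (d - card G) - 1) choose (d - card G) else 0)"
proof -
  define X where "X = {M. size M = d \<and> G \<subseteq> set_mset M \<and> set_mset M \<subseteq> F}"
  have finG: "finite G" using F GF finite_subset by blast
  have sub: "mset_set G \<subseteq># M" if "G \<subseteq> set_mset M" for M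
    unfolding subseteq_mset_def using that finG
    by (auto simp: count_mset_set' Suc_le_eq)
  show ?thesis
  proof (cases "card G \<le> d")
    case True
    have "bij_betw (\<lambda>M'. M' + mset_set G) (multisets_of_size F (d - card G)) X"
    proof (rule bij_betw_byWitness[where f' = "\<lambda>M. M - mset_set G"])
      show "\<forall>a\<in>multisets_of_size F (d - card G). a + mset_set G - mset_set G = a" by simp
      show "\<forall>a'\<in>X. a' - mset_set G + mset_set G = a'"
      proof
        fix a' assume "a' \<in> X"
        hence "mset_set G \<subseteq># a'" using sub unfolding X_def by blast
        thus "a' - mset_set G + mset_set G = a'" by (rule subset_mset.diff_add)
      qed
      show "(\<lambda>M'. M' + mset_set G) ` multisets_of_size F (d - card G) \<subseteq> X"
      proof
        fix M assume "M \<in> (\<lambda>M'. M' + mset_set G) ` multisets_of_size F (d - card G)"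
        then obtain M' where M'0: "M' \<in> multisets_of_size F (d - card G)" "M = M' + mset_set G"
          by (rule imageE)
        hence M': "set_mset M' \<subseteq> F" "size M' = d - card G" "M = M' + mset_set G"
          unfolding multisets_of_size_def by auto
        have "size M = d" using M' True by simp
        moreover have "G \<subseteq> set_mset M" using M' finG by simp
        moreover have "set_mset M \<subseteq> F" using M' finG GF by simp
        ultimately show "M \<in> X" unfolding X_def by blast
      qed
      show "(\<lambda>M. M - mset_set G) ` X \<subseteq> multisets_of_size F (d - card G)"
      proof
        fix M' assume "M' \<in> (\<lambda>M. M - mset_set G) ` X"
        then obtain M where M: "M \<in> X" "M' = M - mset_set G" by blast
        have "size M' = d - card G" using M sub[of M] unfolding X_def
          by (simp add: size_Diff_submset)
        moreover have "set_mset M' \<subseteq> F" using M unfolding X_def by (auto dest: in_diffD)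
        ultimately show "M' \<in> multisets_of_size F (d - card G)" unfolding multisets_of_size_def by simp
      qed
    qed
    hence "card X = card (multisets_of_size F (d - card G))" by (simp add: bij_betw_same_card)
    then show ?thesis using True card_multisets_of_size[OF F] X_def by simp
  next
    case False
    have "X = {}"
    proof (rule ccontr)
      assume "X \<noteq> {}"
      then obtain M where M: "M \<in> X" by blast
      hence "G \<subseteq> set_mset M" unfolding X_def by blast
      hence "size (mset_set G) \<le> size M" by (rule size_mset_mono[OF sub])
      thus False using M False finG unfolding X_def by (simp add: size_mset_set)
    qed
    hence "card X = 0" by simp
    then show ?thesis using False unfolding X_def by simp
  qed
qed

definition Cms :: "nat list \<Rightarrow> nat \<Rightarrow> nat list multiset set" where
  "Cms b d = {M. set_mset M \<in> init_complex b \<and> size M = d}"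

lemma card_Cms: "card (Cms b d) = (\<Sum>u\<in>words b. if desc u \<le> d then (sum_list b + (d - desc u)) choose (d - desc u) else 0)"
proof -
  define X where "X u = {M. size M = d \<and> Gu b u \<subseteq> set_mset M \<and> set_mset M \<subseteq> Fu b u}" for u
  have GF: "Gu b u \<subseteq> Fu b u" for u unfolding Gu_def Fu_def by force
  have finF: "finite (Fu b u)" for u unfolding Fu_def by simp
  have eq: "Cms b d = (\<Union>u\<in>words b. X u)"
  proof
    show "Cms b d \<subseteq> (\<Union>u\<in>words b. X u)"
    proof
      fix M assume "M \<in> Cms b d"
      hence M: "set_mset M \<in> init_complex b" "size M = d" unfolding Cms_def by auto
      then obtain u where "u \<in> words b" "set_mset M \<in> face_interval b (Gu b u) (Fu b u)"
        using part1[of b] by blast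
      then show "M \<in> (\<Union>u\<in>words b. X u)" using M unfolding X_def face_interval_def by blast
    qed
    show "(\<Union>u\<in>words b. X u) \<subseteq> Cms b d"
      unfolding X_def Cms_def using Fu_complex complex_subset by blast
  qed
  have fin: "finite (X u)" for u
  proof -
    have "X u \<subseteq> multisets_of_size (Fu b u) d" unfolding X_def multisets_of_size_def by blast
    then show ?thesis using finite_multisets_of_size[OF finF] finite_subset by blast
  qed
  have disj: "\<forall>u\<in>words b. \<forall>u'\<in>words b. u \<noteq> u' \<longrightarrow> X u \<inter> X u' = {}"
  proof (intro ballI impI)
    fix u u' assume uu: "u \<in> words b" "u' \<in> words b" "u \<noteq> u'"
    show "X u \<inter> X u' = {}"
    proof (rule ccontr)
      assume "X u \<inter> X u' \<noteq> {}"
      then obtain M where M: "M \<in> X u" "M \<in> X u'" by blast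
      have "set_mset M \<in> init_complex b" using M(1) Fu_complex[OF uu(1)] complex_subset unfolding X_def by blast
      hence "set_mset M \<in> face_interval b (Gu b u) (Fu b u) \<inter> face_interval b (Gu b u') (Fu b u')"
        using M unfolding X_def face_interval_def by blast
      thus False using part2[of b] uu by blast
    qed
  qed
  have "card (Cms b d) = (\<Sum>u\<in>words b. card (X u))"
    unfolding eq by (rule card_UN_disjoint[OF finite_words _ disj]) (use fin in blast)
  also have "\<dots> = (\<Sum>u\<in>words b. if desc u \<le> d then (sum_list b + (d - desc u)) choose (d - desc u) else 0)"
  proof (rule sum.cong[OF refl])
    fix u assume u: "u \<in> words b"
    show "card (X u) = (if desc u \<le> d then (sum_list b + (d - desc u)) choose (d - desc u) else 0)"
    proof -
      have "card (X u) = (if card (Gu b u) \<le> d then (card (Fu b u) + (d - card (Gu b u)) - 1) choose (d - card (Gu b u)) else 0)"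
        unfolding X_def by (rule card_ms_interval[OF finF GF])
      then show ?thesis unfolding card_Fu[OF u] card_Gu[OF u] by simp
    qed
  qed
  finally show ?thesis .
qed

definition Qk :: "nat \<Rightarrow> rat fps" where
  "Qk k = Abs_fps (\<lambda>d. of_nat ((k + d) choose d))"

lemma mult_1mX_nth: "((f::rat fps) * (1 - fps_X)) $ n = f $ n - (if n = 0 then 0 else f $ (n - 1))"
proof -
  have "f * (1 - fps_X) = f - f * fps_X" by (metis mult.right_neutral right_diff_distrib)
  then show ?thesis by (simp only: fps_sub_nth fps_X_mult_right_nth)
qed

lemma Qk_step: "Qk (Suc k) * (1 - fps_X) = Qk k"
proof (rule fps_ext)
  fix n
  show "(Qk (Suc k) * (1 - fps_X)) $ n = Qk k $ n"
  proof (cases n)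
    case 0 then show ?thesis by (simp add: mult_1mX_nth Qk_def)
  next
    case (Suc n')
    have "(Suc k + Suc n') choose Suc n' = ((Suc k + n') choose n') + ((Suc k + n') choose Suc n')"
      by simp
    then show ?thesis using Suc by (simp add: mult_1mX_nth Qk_def)
  qed
qed

lemma Qk_inv: "Qk k * (1 - fps_X) ^ Suc k = 1"
proof (induction k)
  case 0
  have "Qk 0 * (1 - fps_X) = 1"
    by (rule fps_ext) (simp add: mult_1mX_nth Qk_def)
  then show ?case by simp
next
  case (Suc k)
  have "Qk (Suc k) * (1 - fps_X) ^ Suc (Suc k) = (Qk (Suc k) * (1 - fps_X)) * (1 - fps_X) ^ Suc k"
    by (simp add: algebra_simps)
  also have "\<dots> = 1" using Suc Qk_step by simp
  finally show ?case .
qed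

lemma series_eq:
  fixes h :: "nat \<Rightarrow> nat"
  assumes h: "\<And>d. h d = card (Cms b d)"
  shows "Abs_fps (\<lambda>d. (of_nat (h d) :: rat)) = fps_of_poly (A_poly b) / (1 - fps_X) ^ (sum_list b + 1)"
proof -
  define N where "N = sum_list b"
  have "((1::rat fps) - fps_X) ^ (N + 1) $ 0 \<noteq> 0" by simp
  hence e1: "fps_of_poly (A_poly b) / (1 - fps_X) ^ (N + 1) = fps_of_poly (A_poly b) * inverse ((1 - fps_X) ^ (N + 1))"
    by (rule fps_divide_unit)
  have e2: "inverse (((1::rat fps) - fps_X) ^ (N + 1)) = Qk N"
    by (rule fps_inverse_unique) (use Qk_inv[of N] in \<open>simp add: mult.commute\<close>)
  have e3: "fps_of_poly (A_poly b) = (\<Sum>u\<in>words b. fps_X ^ desc u)"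
    unfolding A_poly_def by (simp add: fps_of_poly_sum fps_of_poly_monom')
  have eq: "fps_of_poly (A_poly b) / (1 - fps_X) ^ (N + 1) = (\<Sum>u\<in>words b. fps_X ^ desc u) * Qk N"
    unfolding e1 e2 using e3 by simp
  show ?thesis unfolding N_def[symmetric] eq
  proof (rule fps_ext)
    fix d
    have "((\<Sum>u\<in>words b. fps_X ^ desc u) * Qk N) $ d = (\<Sum>u\<in>words b. (fps_X ^ desc u * Qk N) $ d)"
      by (simp add: sum_distrib_right fps_sum_nth)
    also have "\<dots> = (\<Sum>u\<in>words b. of_nat (if desc u \<le> d then (N + (d - desc u)) choose (d - desc u) else 0))"
      by (rule sum.cong) (auto simp: fps_X_power_mult_nth Qk_def)
    also have "\<dots> = of_nat (card (Cms b d))" unfolding card_Cms N_def by simp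
    finally show "Abs_fps (\<lambda>d. of_nat (h d)) $ d = ((\<Sum>u\<in>words b. fps_X ^ desc u) * Qk N) $ d"
      using h by simp
  qed
qed

lemma part4: "\<forall>k. coeff (A_poly b) k = of_nat (newcomb b k)"
proof
  fix k
  have "coeff (A_poly b) k = (\<Sum>u\<in>words b. if desc u = k then 1 else 0)"
    unfolding A_poly_def by (simp add: coeff_sum coeff_monom)
  also have "\<dots> = of_nat (card {u \<in> words b. desc u = k})"
    using finite_words[of b] by (simp add: sum.If_cases Int_def)
  finally show "coeff (A_poly b) k = of_nat (newcomb b k)" unfolding newcomb_def .
qed



lemma chain_min:
  assumes H: "H \<in> init_complex b" and ne: "H \<noteq> {}"
  shows "\<exists>v\<in>H. \<forall>w\<in>H. cle b v w"
proof -
  have Hbox: "H \<subseteq> box b" and chain: "\<forall>v\<in>H. \<forall>w\<in>H. cle b v w \<or> cle b w v"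
    using H unfolding init_complex_def by auto
  have finH: "finite H" using finite_subset[OF Hbox finite_box] .
  define s where "s = Min (sum_list ` H)"
  have "s \<in> sum_list ` H" unfolding s_def using finH ne by (intro Min_in) auto
  then obtain h where h: "h \<in> H" "sum_list h = s" by blast
  have smin: "sum_list h \<le> sum_list w" if "w \<in> H" for w
    using h(2) that finH unfolding s_def by simp
  have lenH: "length w = length b" if "w \<in> H" for w using that Hbox by (auto simp: box_def)
  have "cle b h w" if wH: "w \<in> H" for w
  proof (cases "cle b w h")
    case True
    have "h = w"
    proof (rule ccontr)
      assume "h \<noteq> w"
      hence "sum_list w < sum_list h" using True lenH[OF wH] lenH[OF h(1)]
        by (intro sum_le_strict) (auto simp: cle_def)
      thus False using smin[OF wH] by simp
    qed
    thus ?thesis by (simp add: cle_def)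
  next
    case False
    thus ?thesis using chain wH h(1) by blast
  qed
  thus ?thesis using h(1) by blast
qed

lemma ms_chain_unique:
  "set_mset M \<in> init_complex b \<Longrightarrow> set_mset M' \<in> init_complex b \<Longrightarrow> size M = size M'
   \<Longrightarrow> (\<forall>i<length b. image_mset (\<lambda>v. v!i) M = image_mset (\<lambda>v. v!i) M') \<Longrightarrow> M = M'"
proof (induction "size M" arbitrary: M M')
  case 0
  then show ?case by simp
next
  case (Suc d)
  have sM': "size M' = Suc d" using Suc.hyps(2) Suc.prems(3) by simp
  have ne: "set_mset M \<noteq> {}" "set_mset M' \<noteq> {}" using Suc.hyps(2) sM' by auto
  obtain v where v: "v \<in># M" "\<forall>w\<in>#M. cle b v w" using chain_min[OF Suc.prems(1) ne(1)] by blast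
  obtain v' where v': "v' \<in># M'" "\<forall>w\<in>#M'. cle b v' w" using chain_min[OF Suc.prems(2) ne(2)] by blast
  have lv: "length v = length b" using v(1) Suc.prems(1) unfolding init_complex_def box_def by auto
  have lv': "length v' = length b" using v'(1) Suc.prems(2) unfolding init_complex_def box_def by auto
  have vv: "v = v'"
  proof (rule nth_equalityI)
    show "length v = length v'" using lv lv' by simp
    fix i assume "i < length v"
    hence i: "i < length b" using lv by simp
    have im: "image_mset (\<lambda>v. v!i) M = image_mset (\<lambda>v. v!i) M'" using Suc.prems(4) i by blast
    have "v!i \<in># image_mset (\<lambda>v. v!i) M'" using v(1) im[symmetric] by (metis image_eqI set_image_mset)
    then obtain w' where w': "w' \<in># M'" "w'!i = v!i" by auto
    have "v'!i \<le> v!i" using v'(2) w' i unfolding cle_def by metis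
    moreover
    have "v'!i \<in># image_mset (\<lambda>v. v!i) M" using v'(1) im by (metis image_eqI set_image_mset)
    then obtain w where w: "w \<in># M" "w!i = v'!i" by auto
    have "v!i \<le> v'!i" using v(2) w i unfolding cle_def by metis
    ultimately show "v ! i = v' ! i" by simp
  qed
  define N where "N = M - {#v#}"
  define N' where "N' = M' - {#v#}"
  have "N = N'"
  proof (rule Suc.hyps(1))
    show "d = size N" using Suc.hyps(2) v(1) unfolding N_def by (simp add: size_Diff_singleton)
    show "set_mset N \<in> init_complex b" using Suc.prems(1) unfolding N_def
      by (rule complex_subset) (auto dest: in_diffD)
    show "set_mset N' \<in> init_complex b" using Suc.prems(2) unfolding N'_def
      by (rule complex_subset) (auto dest: in_diffD)
    show "size N = size N'" using Suc.prems(3) v(1) v'(1) vv unfolding N_def N'_def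
      by (simp add: size_Diff_singleton)
    show "\<forall>i<length b. image_mset (\<lambda>v. v ! i) N = image_mset (\<lambda>v. v ! i) N'"
    proof (intro allI impI)
      fix i assume i: "i < length b"
      have "image_mset (\<lambda>v. v ! i) N = image_mset (\<lambda>v. v ! i) M - {#v!i#}"
        unfolding N_def using v(1) by (simp add: image_mset_Diff)
      also have "\<dots> = image_mset (\<lambda>v. v ! i) M' - {#v!i#}" using Suc.prems(4) i by simp
      also have "\<dots> = image_mset (\<lambda>v. v ! i) N'"
        unfolding N'_def using v'(1) vv by (simp add: image_mset_Diff)
      finally show "image_mset (\<lambda>v. v ! i) N = image_mset (\<lambda>v. v ! i) N'" .
    qed
  qed
  then show ?case using v(1) v'(1) vv unfolding N_def N'_def by (metis insert_DiffM)
qed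

lemma ms_chain_exists:
  assumes M: "set_mset M \<subseteq> box b"
  shows "\<exists>M'. set_mset M' \<in> init_complex b \<and> size M' = size M \<and>
     (\<forall>i<length b. image_mset (\<lambda>v. v!i) M' = image_mset (\<lambda>v. v!i) M)"
proof -
  define n where "n = length b"
  define d where "d = size M"
  define L where "L i = sorted_list_of_multiset (image_mset (\<lambda>v. v!i) M)" for i
  have lenL: "length (L i) = d" for i
  proof -
    have "length (L i) = size (mset (L i))" by simp
    also have "\<dots> = d" unfolding L_def d_def by (simp only: mset_sorted_list_of_multiset size_image_mset)
    finally show ?thesis .
  qed
  define w where "w k = map (\<lambda>i. L i ! k) [0..<n]" for k
  define M' where "M' = mset (map w [0..<d])"
  have wi: "w k ! i = L i ! k" if "i < n" for i k using that by (simp add: w_def)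
  have lw: "length (w k) = n" for k by (simp add: w_def)
  have "size M' = d" by (simp add: M'_def)
  moreover have "image_mset (\<lambda>v. v!i) M' = image_mset (\<lambda>v. v!i) M" if i: "i < n" for i
  proof -
    have "image_mset (\<lambda>v. v!i) M' = mset (map (\<lambda>k. w k ! i) [0..<d])"
      unfolding M'_def by (simp add: mset_map multiset.map_comp o_def)
    also have "map (\<lambda>k. w k ! i) [0..<d] = map (\<lambda>k. L i ! k) [0..<d]" using wi i by simp
    also have "\<dots> = L i" using map_nth[of "L i"] lenL[of i] by simp
    finally show ?thesis unfolding L_def by simp
  qed
  moreover have "set_mset M' \<in> init_complex b"
  proof -
    have sM': "set_mset M' = w ` {0..<d}" by (simp add: M'_def)
    have "w k \<in> box b" if "k < d" for k
    proof -
      have "w k ! i \<le> b ! i" if i: "i < n" for i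
      proof -
        have "L i ! k \<in> set (L i)" using lenL \<open>k < d\<close> by simp
        hence "L i ! k \<in># image_mset (\<lambda>v. v!i) M" unfolding L_def by simp
        then obtain v where v: "v \<in># M" "L i ! k = v ! i" by auto
        have "v ! i \<le> b ! i" using v(1) M i unfolding box_def n_def by auto
        thus ?thesis using v(2) wi i by simp
      qed
      thus ?thesis unfolding box_def using lw n_def by simp
    qed
    hence s1: "set_mset M' \<subseteq> box b" unfolding sM' by auto
    have mono: "cle b (w k) (w k')" if "k \<le> k'" "k' < d" for k k'
      unfolding cle_def
    proof (intro allI impI)
      fix i assume i: "i < length b"
      have "sorted (L i)" unfolding L_def by simp
      hence "L i ! k \<le> L i ! k'" using that lenL[of i] by (simp add: sorted_nth_mono)
      thus "w k ! i \<le> w k' ! i" using wi i n_def by simp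
    qed
    have s2: "\<forall>x\<in>set_mset M'. \<forall>y\<in>set_mset M'. cle b x y \<or> cle b y x"
      unfolding sM' using mono by (metis atLeastLessThan_iff imageE nat_le_linear)
    show ?thesis unfolding init_complex_def using s1 s2 by blast
  qed
  ultimately show ?thesis unfolding d_def n_def by blast
qed



definition pm2ms :: "('a \<Rightarrow>\<^sub>0 nat) \<Rightarrow> 'a multiset" where
  "pm2ms \<alpha> = Abs_multiset (Poly_Mapping.lookup \<alpha>)"

definition ms2pm :: "'a multiset \<Rightarrow> ('a \<Rightarrow>\<^sub>0 nat)" where
  "ms2pm M = Abs_poly_mapping (count M)"

lemma count_pm2ms: "count (pm2ms \<alpha>) = Poly_Mapping.lookup \<alpha>"
proof -
  have "{x. 0 < Poly_Mapping.lookup \<alpha> x} = Poly_Mapping.keys \<alpha>" by (auto simp: in_keys_iff)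
  hence "finite {x. 0 < Poly_Mapping.lookup \<alpha> x}" by simp
  thus ?thesis unfolding pm2ms_def by (simp add: Abs_multiset_inverse)
qed

lemma lookup_ms2pm: "Poly_Mapping.lookup (ms2pm M) = count M"
proof -
  have "{x. count M x \<noteq> 0} = set_mset M" by (auto simp: count_eq_zero_iff)
  hence "finite {x. count M x \<noteq> 0}" by simp
  thus ?thesis unfolding ms2pm_def by (simp add: Abs_poly_mapping_inverse)
qed

lemma pm2ms_ms2pm[simp]: "pm2ms (ms2pm M) = M"
  by (rule multiset_eqI) (simp add: count_pm2ms lookup_ms2pm)

lemma ms2pm_pm2ms[simp]: "ms2pm (pm2ms \<alpha>) = \<alpha>"
  by (rule poly_mapping_eqI) (simp add: count_pm2ms lookup_ms2pm)

lemma set_pm2ms: "set_mset (pm2ms \<alpha>) = Poly_Mapping.keys \<alpha>"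
  by (auto simp: set_mset_def count_pm2ms in_keys_iff)

lemma size_pm2ms: "size (pm2ms \<alpha>) = (\<Sum>v\<in>Poly_Mapping.keys \<alpha>. Poly_Mapping.lookup \<alpha> v)"
  by (simp add: size_multiset_overloaded_eq set_pm2ms count_pm2ms)

lemma inj_pm2ms: "inj pm2ms"
  by (metis injI ms2pm_pm2ms)

definition pdeg :: "(nat list \<Rightarrow>\<^sub>0 nat) \<Rightarrow> nat" where
  "pdeg \<alpha> = (\<Sum>v\<in>Poly_Mapping.keys \<alpha>. Poly_Mapping.lookup \<alpha> v)"

definition Mon :: "nat list \<Rightarrow> nat \<Rightarrow> (nat list \<Rightarrow>\<^sub>0 nat) set" where
  "Mon b d = {\<alpha>. Poly_Mapping.keys \<alpha> \<subseteq> box b \<and> pdeg \<alpha> = d}"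

definition Std :: "nat list \<Rightarrow> nat \<Rightarrow> (nat list \<Rightarrow>\<^sub>0 nat) set" where
  "Std b d = {\<alpha> \<in> Mon b d. Poly_Mapping.keys \<alpha> \<in> init_complex b}"

lemma keys_ms2pm: "Poly_Mapping.keys (ms2pm M) = set_mset M"
  using set_pm2ms[of "ms2pm M"] by simp

lemma pdeg_size: "pdeg \<alpha> = size (pm2ms \<alpha>)"
  unfolding pdeg_def by (simp add: size_pm2ms)

lemma pdeg_ms2pm: "pdeg (ms2pm M) = size M"
  using pdeg_size[of "ms2pm M"] by simp

lemma bij_Std: "bij_betw pm2ms (Std b d) (Cms b d)"
proof (rule bij_betw_byWitness[where f' = ms2pm])
  show "\<forall>a\<in>Std b d. ms2pm (pm2ms a) = a" by simp
  show "\<forall>a'\<in>Cms b d. pm2ms (ms2pm a') = a'" by simp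
  show "pm2ms ` Std b d \<subseteq> Cms b d"
  proof
    fix M assume "M \<in> pm2ms ` Std b d"
    then obtain \<alpha> where a: "\<alpha> \<in> Std b d" "M = pm2ms \<alpha>" by (rule imageE)
    have "set_mset (pm2ms \<alpha>) \<in> init_complex b" "size (pm2ms \<alpha>) = d"
      using a(1) unfolding Std_def Mon_def set_pm2ms pdeg_size[symmetric] by blast+
    thus "M \<in> Cms b d" unfolding Cms_def a(2) by blast
  qed
  show "ms2pm ` Cms b d \<subseteq> Std b d"
  proof
    fix \<alpha> assume "\<alpha> \<in> ms2pm ` Cms b d"
    then obtain M where M: "M \<in> Cms b d" "\<alpha> = ms2pm M" by (rule imageE)
    have "set_mset M \<subseteq> box b" using M(1) unfolding Cms_def init_complex_def by blast
    moreover have "set_mset M \<in> init_complex b" "size M = d" using M(1) unfolding Cms_def by blast+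
    ultimately show "\<alpha> \<in> Std b d" unfolding M(2) Std_def Mon_def
      by (simp only: keys_ms2pm pdeg_ms2pm mem_Collect_eq)
  qed
qed

lemma card_Std: "card (Std b d) = card (Cms b d)"
  using bij_Std by (rule bij_betw_same_card)

lemma bij_Mon: "bij_betw pm2ms (Mon b d) (multisets_of_size (box b) d)"
proof (rule bij_betw_byWitness[where f' = ms2pm])
  show "\<forall>a\<in>Mon b d. ms2pm (pm2ms a) = a" by simp
  show "\<forall>a'\<in>multisets_of_size (box b) d. pm2ms (ms2pm a') = a'" by simp
  show "pm2ms ` Mon b d \<subseteq> multisets_of_size (box b) d"
  proof
    fix M assume "M \<in> pm2ms ` Mon b d"
    then obtain \<alpha> where a: "\<alpha> \<in> Mon b d" "M = pm2ms \<alpha>" by (rule imageE)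
    have "set_mset (pm2ms \<alpha>) \<subseteq> box b" "size (pm2ms \<alpha>) = d"
      using a(1) unfolding Mon_def set_pm2ms pdeg_size[symmetric] by blast+
    thus "M \<in> multisets_of_size (box b) d" unfolding multisets_of_size_def a(2) by blast
  qed
  show "ms2pm ` multisets_of_size (box b) d \<subseteq> Mon b d"
  proof
    fix \<alpha> assume "\<alpha> \<in> ms2pm ` multisets_of_size (box b) d"
    then obtain M where M: "M \<in> multisets_of_size (box b) d" "\<alpha> = ms2pm M" by (rule imageE)
    have "set_mset M \<subseteq> box b" "size M = d" using M(1) unfolding multisets_of_size_def by blast+
    thus "\<alpha> \<in> Mon b d" unfolding M(2) Mon_def
      by (simp only: keys_ms2pm pdeg_ms2pm mem_Collect_eq)
  qed
qed

lemma finite_Mon: "finite (Mon b d)"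
  using bij_betw_finite[OF bij_Mon] finite_multisets_of_size[OF finite_box] by blast

lemma Std_Mon: "Std b d \<subseteq> Mon b d" unfolding Std_def by blast

lemma lookup_xmonom: "Poly_Mapping.lookup (xmonom \<alpha>) (i, j) =
   (\<Sum>v\<in>Poly_Mapping.keys \<alpha>. if i < length v \<and> v ! i = j then Poly_Mapping.lookup \<alpha> v else 0)"
proof -
  have inner: "(\<Sum>i'<length v. Poly_Mapping.lookup (Poly_Mapping.single (i', v ! i') (Poly_Mapping.lookup \<alpha> v)) (i, j))
     = (if i < length v \<and> v ! i = j then Poly_Mapping.lookup \<alpha> v else 0)" for v
  proof -
    have "(\<Sum>i'<length v. Poly_Mapping.lookup (Poly_Mapping.single (i', v ! i') (Poly_Mapping.lookup \<alpha> v)) (i, j))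
       = (\<Sum>i'<length v. if i' = i then (if v ! i = j then Poly_Mapping.lookup \<alpha> v else 0) else 0)"
      by (intro sum.cong) (auto simp: lookup_single when_def)
    also have "\<dots> = (if i < length v \<and> v ! i = j then Poly_Mapping.lookup \<alpha> v else 0)"
      by (subst sum.delta) auto
    finally show ?thesis .
  qed
  show ?thesis unfolding xmonom_def by (simp add: lookup_sum inner)
qed

lemma lookup_xmonom_ms:
  assumes "Poly_Mapping.keys \<alpha> \<subseteq> box b" "i < length b"
  shows "Poly_Mapping.lookup (xmonom \<alpha>) (i, j) = count (image_mset (\<lambda>v. v!i) (pm2ms \<alpha>)) j"
proof -
  have len: "length v = length b" if "v \<in> Poly_Mapping.keys \<alpha>" for v
    using assms(1) that unfolding box_def by auto
  have "Poly_Mapping.lookup (xmonom \<alpha>) (i, j) =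
     (\<Sum>v\<in>Poly_Mapping.keys \<alpha>. if v ! i = j then Poly_Mapping.lookup \<alpha> v else 0)"
    unfolding lookup_xmonom using len assms(2) by (intro sum.cong) auto
  also have "\<dots> = (\<Sum>v\<in>{v\<in>Poly_Mapping.keys \<alpha>. v ! i = j}. Poly_Mapping.lookup \<alpha> v)"
    by (simp add: sum.If_cases Int_def)
  also have "\<dots> = count (image_mset (\<lambda>v. v!i) (pm2ms \<alpha>)) j"
    unfolding count_image_mset set_pm2ms count_pm2ms by (intro sum.cong) auto
  finally show ?thesis .
qed

lemma lookup_xmonom_out:
  assumes "Poly_Mapping.keys \<alpha> \<subseteq> box b" "\<not> i < length b"
  shows "Poly_Mapping.lookup (xmonom \<alpha>) (i, j) = 0"
proof -
  have len: "length v = length b" if "v \<in> Poly_Mapping.keys \<alpha>" for v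
    using assms(1) that unfolding box_def by auto
  show ?thesis unfolding lookup_xmonom using len assms(2) by (intro sum.neutral) auto
qed

lemma xmonom_eq_iff:
  assumes "Poly_Mapping.keys \<alpha> \<subseteq> box b" "Poly_Mapping.keys \<beta> \<subseteq> box b"
  shows "xmonom \<alpha> = xmonom \<beta> \<longleftrightarrow>
    (\<forall>i<length b. image_mset (\<lambda>v. v!i) (pm2ms \<alpha>) = image_mset (\<lambda>v. v!i) (pm2ms \<beta>))"
proof
  assume eq: "xmonom \<alpha> = xmonom \<beta>"
  show "\<forall>i<length b. image_mset (\<lambda>v. v!i) (pm2ms \<alpha>) = image_mset (\<lambda>v. v!i) (pm2ms \<beta>)"
  proof (intro allI impI multiset_eqI)
    fix i j assume i: "i < length b"
    show "count (image_mset (\<lambda>v. v!i) (pm2ms \<alpha>)) j = count (image_mset (\<lambda>v. v!i) (pm2ms \<beta>)) j"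
      using lookup_xmonom_ms[OF assms(1) i, of j] lookup_xmonom_ms[OF assms(2) i, of j] eq by simp
  qed
next
  assume eq: "\<forall>i<length b. image_mset (\<lambda>v. v!i) (pm2ms \<alpha>) = image_mset (\<lambda>v. v!i) (pm2ms \<beta>)"
  show "xmonom \<alpha> = xmonom \<beta>"
  proof (rule poly_mapping_eqI)
    fix k :: "nat \<times> nat"
    obtain i j where k: "k = (i, j)" by (cases k)
    show "Poly_Mapping.lookup (xmonom \<alpha>) k = Poly_Mapping.lookup (xmonom \<beta>) k"
    proof (cases "i < length b")
      case True
      then show ?thesis unfolding k using lookup_xmonom_ms[OF assms(1) True, of j]
        lookup_xmonom_ms[OF assms(2) True, of j] eq by simp
    next
      case False
      then show ?thesis unfolding k using lookup_xmonom_out[OF assms(1) False] lookup_xmonom_out[OF assms(2) False]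
        by simp
    qed
  qed
qed

lemma Std_exists: assumes "\<alpha> \<in> Mon b d" shows "\<exists>\<beta>\<in>Std b d. xmonom \<beta> = xmonom \<alpha>"
proof -
  have ka: "Poly_Mapping.keys \<alpha> \<subseteq> box b" using assms unfolding Mon_def by blast
  obtain M' where M': "set_mset M' \<in> init_complex b" "size M' = size (pm2ms \<alpha>)"
     "\<forall>i<length b. image_mset (\<lambda>v. v!i) M' = image_mset (\<lambda>v. v!i) (pm2ms \<alpha>)"
    using ms_chain_exists[of "pm2ms \<alpha>" b] ka by (auto simp: set_pm2ms)
  define \<beta> where "\<beta> = ms2pm M'"
  have pb: "pm2ms \<beta> = M'" unfolding \<beta>_def by simp
  have "size (pm2ms \<alpha>) = d" using assms unfolding Mon_def pdeg_size by blast
  hence "M' \<in> Cms b d" using M' unfolding Cms_def by simp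
  hence bS: "\<beta> \<in> Std b d" using bij_Std[of b d] pb unfolding \<beta>_def
    by (metis bij_betw_def bij_betw_inv_into_left inj_pm2ms inv_into_f_f ms2pm_pm2ms pm2ms_ms2pm bij_betw_imp_surj_on imageE)
  have kb: "Poly_Mapping.keys \<beta> \<subseteq> box b" using bS unfolding Std_def Mon_def by blast
  have "xmonom \<beta> = xmonom \<alpha>" using xmonom_eq_iff[OF kb ka] M'(3) pb by simp
  thus ?thesis using bS by blast
qed

lemma Std_inj: "inj_on xmonom (Std b d)"
proof
  fix \<alpha> \<beta> assume a: "\<alpha> \<in> Std b d" and bb: "\<beta> \<in> Std b d" and eq: "xmonom \<alpha> = xmonom \<beta>"
  have ka: "Poly_Mapping.keys \<alpha> \<subseteq> box b" and kb: "Poly_Mapping.keys \<beta> \<subseteq> box b"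
    using a bb unfolding Std_def Mon_def by auto
  have "pm2ms \<alpha> \<in> Cms b d" "pm2ms \<beta> \<in> Cms b d" using bij_Std[of b d] a bb by (auto simp: bij_betw_def)
  hence "pm2ms \<alpha> = pm2ms \<beta>" using xmonom_eq_iff[OF ka kb] eq unfolding Cms_def
    by (intro ms_chain_unique[of _ b]) auto
  thus "\<alpha> = \<beta>" by (metis ms2pm_pm2ms)
qed



lemma lookup_pm_scale: "Poly_Mapping.lookup (pm_scale c p) k = c * Poly_Mapping.lookup p k"
  by (simp add: pm_scale_def Poly_Mapping.map.rep_eq when_def)

interpretation pmvs: vector_space "pm_scale :: 'k::field \<Rightarrow> ('m \<Rightarrow>\<^sub>0 'k) \<Rightarrow> ('m \<Rightarrow>\<^sub>0 'k)"
  by unfold_locales (auto intro!: poly_mapping_eqI simp: lookup_pm_scale lookup_add algebra_simps)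

lemma pm_scale_single: "pm_scale c (Poly_Mapping.single x a) = Poly_Mapping.single x (c * a)"
  by (rule poly_mapping_eqI) (simp add: lookup_pm_scale lookup_single when_def)

lemma phi_finite:
  assumes "finite A" "Poly_Mapping.keys p \<subseteq> A"
  shows "phi p = (\<Sum>\<alpha>\<in>A. Poly_Mapping.single (xmonom \<alpha>) (Poly_Mapping.lookup p \<alpha>))"
  unfolding phi_def by (rule sum.mono_neutral_left) (use assms in \<open>auto simp: in_keys_iff\<close>)

lemma phi_zero: "phi 0 = 0"
  by (simp add: phi_def)

lemma phi_add: "phi (p + q) = phi p + phi q"
proof -
  define A where "A = Poly_Mapping.keys p \<union> Poly_Mapping.keys q"
  have fA: "finite A" by (simp add: A_def)
  have "phi (p + q) = (\<Sum>\<alpha>\<in>A. Poly_Mapping.single (xmonom \<alpha>) (Poly_Mapping.lookup (p + q) \<alpha>))"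
    using keys_add[of p q] by (intro phi_finite fA) (auto simp: A_def)
  also have "\<dots> = (\<Sum>\<alpha>\<in>A. Poly_Mapping.single (xmonom \<alpha>) (Poly_Mapping.lookup p \<alpha>)
      + Poly_Mapping.single (xmonom \<alpha>) (Poly_Mapping.lookup q \<alpha>))"
    by (simp add: lookup_add single_add)
  also have "\<dots> = phi p + phi q"
    by (simp add: sum.distrib phi_finite[OF fA, of p] phi_finite[OF fA, of q] A_def)
  finally show ?thesis .
qed

lemma phi_diff: "phi (p - q) = phi p - phi q"
  using phi_add[of "p - q" q] by (simp add: eq_diff_eq)

lemma keys_pm_scale: "Poly_Mapping.keys (pm_scale c p) \<subseteq> Poly_Mapping.keys p"
  by (auto simp: in_keys_iff lookup_pm_scale)

lemma phi_scale: "phi (pm_scale c p) = pm_scale c (phi p)"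
proof -
  have fA: "finite (Poly_Mapping.keys p)" by simp
  have "phi (pm_scale c p) = (\<Sum>\<alpha>\<in>Poly_Mapping.keys p. Poly_Mapping.single (xmonom \<alpha>) (Poly_Mapping.lookup (pm_scale c p) \<alpha>))"
    by (rule phi_finite[OF fA keys_pm_scale])
  also have "\<dots> = (\<Sum>\<alpha>\<in>Poly_Mapping.keys p. pm_scale c (Poly_Mapping.single (xmonom \<alpha>) (Poly_Mapping.lookup p \<alpha>)))"
    by (simp add: lookup_pm_scale pm_scale_single)
  also have "\<dots> = pm_scale c (phi p)"
    unfolding phi_def by (rule pmvs.scale_sum_right[symmetric])
  finally show ?thesis .
qed

lemma phi_sum: "phi (sum f A) = (\<Sum>x\<in>A. phi (f x))"
proof (induction A rule: infinite_finite_induct)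
  case (infinite A) then show ?case by (simp add: phi_zero)
next
  case empty then show ?case by (simp add: phi_zero)
next
  case (insert x F) then show ?case by (simp add: phi_add)
qed

lemma phi_mon: "phi (Poly_Mapping.single \<alpha> (1::'k::field)) = Poly_Mapping.single (xmonom \<alpha>) 1"
  by (simp add: phi_def)

lemma pm_expand: "p = (\<Sum>\<alpha>\<in>Poly_Mapping.keys p. pm_scale (Poly_Mapping.lookup p \<alpha>) (Poly_Mapping.single \<alpha> (1::'k::field)))"
proof (rule poly_mapping_eqI)
  fix k
  have "Poly_Mapping.lookup (\<Sum>\<alpha>\<in>Poly_Mapping.keys p. pm_scale (Poly_Mapping.lookup p \<alpha>) (Poly_Mapping.single \<alpha> (1::'k))) k
     = (\<Sum>\<alpha>\<in>Poly_Mapping.keys p. if \<alpha> = k then Poly_Mapping.lookup p \<alpha> else 0)"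
    unfolding lookup_sum lookup_pm_scale lookup_single when_def by (intro sum.cong) auto
  also have "\<dots> = Poly_Mapping.lookup p k" by (simp add: in_keys_iff)
  finally show "Poly_Mapping.lookup p k = Poly_Mapping.lookup (\<Sum>\<alpha>\<in>Poly_Mapping.keys p. pm_scale (Poly_Mapping.lookup p \<alpha>) (Poly_Mapping.single \<alpha> (1::'k))) k"
    by simp
qed

lemma S_deg_iff: "p \<in> S_deg b d \<longleftrightarrow> Poly_Mapping.keys p \<subseteq> Mon b d"
  unfolding S_deg_def S_ring_def Mon_def pdeg_def by blast

lemma single_one_inj: "Poly_Mapping.single \<alpha> (1::'k::field) = Poly_Mapping.single \<beta> 1 \<Longrightarrow> \<alpha> = \<beta>"
  by (metis lookup_single_eq lookup_single_not_eq one_neq_zero)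

lemma keys_diff_sub: "Poly_Mapping.keys (p - q) \<subseteq> Poly_Mapping.keys p \<union> Poly_Mapping.keys (q::'a \<Rightarrow>\<^sub>0 'b::ab_group_add)"
  by (auto simp: in_keys_iff lookup_minus)

lemma hilbert_Std: "hilbert_fun TYPE('k::field) b d = card (Std b d)"
proof -
  define S where "S = (S_deg b d :: ((nat list \<Rightarrow>\<^sub>0 nat) \<Rightarrow>\<^sub>0 'k) set)"
  define J where "J = (J_ideal b :: ((nat list \<Rightarrow>\<^sub>0 nat) \<Rightarrow>\<^sub>0 'k) set)"
  define mon where "mon \<alpha> = (Poly_Mapping.single \<alpha> (1::'k))" for \<alpha> :: "nat list \<Rightarrow>\<^sub>0 nat"
  define T where "T = mon ` Std b d"
  define MT where "MT = mon ` Mon b d"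
  have hf: "hilbert_fun TYPE('k) b d = pmvs.dim S - pmvs.dim (S \<inter> J)"
    unfolding hilbert_fun_def S_def J_def by simp
  obtain B1 where B1: "B1 \<subseteq> S \<inter> J" "pmvs.independent B1" "S \<inter> J \<subseteq> pmvs.span B1"
      "card B1 = pmvs.dim (S \<inter> J)"
    by (rule pmvs.basis_exists)
  have finMT: "finite MT" unfolding MT_def using finite_Mon by simp
  have expand_in: "p \<in> pmvs.span X" if "\<forall>\<alpha>\<in>Poly_Mapping.keys p. mon \<alpha> \<in> pmvs.span X" for p X
  proof -
    have "(\<Sum>\<alpha>\<in>Poly_Mapping.keys p. pm_scale (Poly_Mapping.lookup p \<alpha>) (mon \<alpha>)) \<in> pmvs.span X"
      using that by (intro pmvs.span_sum pmvs.span_scale) auto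
    thus ?thesis using pm_expand[of p] unfolding mon_def by simp
  qed
  have S_MT: "S \<subseteq> pmvs.span MT"
  proof
    fix p assume "p \<in> S"
    hence "Poly_Mapping.keys p \<subseteq> Mon b d" unfolding S_def S_deg_iff .
    hence "\<forall>\<alpha>\<in>Poly_Mapping.keys p. mon \<alpha> \<in> pmvs.span MT" unfolding MT_def
      by (auto intro: pmvs.span_base)
    thus "p \<in> pmvs.span MT" by (rule expand_in)
  qed
  have finB1: "finite B1"
    using pmvs.independent_span_bound[OF finMT B1(2)] B1(1) S_MT by blast
  have monS: "mon \<alpha> \<in> S" if "\<alpha> \<in> Mon b d" for \<alpha>
    unfolding S_def S_deg_iff mon_def using that by simp
  have TS: "T \<subseteq> S" unfolding T_def using monS Std_Mon by blast
  have phimon: "phi (mon \<alpha>) = Poly_Mapping.single (xmonom \<alpha>) 1" for \<alpha>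
    unfolding mon_def by (rule phi_mon)
  have phiB1: "phi v = 0" if "v \<in> B1" for v using that B1(1) unfolding J_def J_ideal_def by blast
  have disj: "B1 \<inter> T = {}"
  proof (rule ccontr)
    assume "B1 \<inter> T \<noteq> {}"
    then obtain \<beta> where "mon \<beta> \<in> B1" unfolding T_def by blast
    hence "phi (mon \<beta>) = 0" by (rule phiB1)
    thus False unfolding phimon by (metis lookup_single_eq lookup_zero one_neq_zero)
  qed
  have finT: "finite T" unfolding T_def using finite_subset[OF Std_Mon finite_Mon] by simp
  have injmon: "inj_on mon X" for X unfolding mon_def by (meson inj_onI single_one_inj)
  have indep: "pmvs.independent (B1 \<union> T)"
  proof
    assume "pmvs.dependent (B1 \<union> T)"
    then obtain u where u: "\<exists>v\<in>B1 \<union> T. u v \<noteq> 0" "(\<Sum>v\<in>B1 \<union> T. pm_scale (u v) v) = 0"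
      using pmvs.dependent_finite[of "B1 \<union> T"] finB1 finT by auto
    define s1 where "s1 = (\<Sum>v\<in>B1. pm_scale (u v) v)"
    define s2 where "s2 = (\<Sum>v\<in>T. pm_scale (u v) v)"
    have split: "s1 + s2 = 0" using u(2) disj finB1 finT unfolding s1_def s2_def
      by (simp add: sum.union_disjoint)
    have "phi s1 = 0" unfolding s1_def phi_sum phi_scale using phiB1
      by (simp add: pmvs.scale_zero_right)
    hence phis2: "phi s2 = 0" using split phi_add[of s1 s2] phi_zero by (metis add.left_neutral)
    have s2eq: "s2 = (\<Sum>\<beta>\<in>Std b d. pm_scale (u (mon \<beta>)) (mon \<beta>))"
      unfolding s2_def T_def by (rule sum.reindex[OF injmon, unfolded o_def])
    have phis2e: "phi s2 = (\<Sum>\<beta>\<in>Std b d. Poly_Mapping.single (xmonom \<beta>) (u (mon \<beta>)))"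
      unfolding s2eq phi_sum phi_scale phimon by (simp add: pm_scale_single)
    have uT: "u (mon \<beta>0) = 0" if b0: "\<beta>0 \<in> Std b d" for \<beta>0
    proof -
      have "0 = Poly_Mapping.lookup (phi s2) (xmonom \<beta>0)" using phis2 by simp
      also have "\<dots> = (\<Sum>\<beta>\<in>Std b d. if xmonom \<beta> = xmonom \<beta>0 then u (mon \<beta>) else 0)"
        unfolding phis2e lookup_sum lookup_single when_def by simp
      also have "\<dots> = (\<Sum>\<beta>\<in>Std b d. if \<beta> = \<beta>0 then u (mon \<beta>) else 0)"
        using Std_inj[of b d] b0 by (intro sum.cong refl) (auto dest: inj_onD)
      also have "\<dots> = u (mon \<beta>0)" using b0 finite_subset[OF Std_Mon finite_Mon] by simp
      finally show ?thesis by simp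
    qed
    hence uT': "u v = 0" if "v \<in> T" for v using that unfolding T_def by blast
    have "s2 = 0" unfolding s2_def using uT' by (simp add: pmvs.scale_zero_left)
    hence "s1 = 0" using split by simp
    hence uB1: "u v = 0" if "v \<in> B1" for v
      using B1(2) pmvs.dependent_finite[OF finB1] that unfolding s1_def by blast
    show False using u(1) uB1 uT' by blast
  qed
  have spanS: "S \<subseteq> pmvs.span (B1 \<union> T)"
  proof
    fix p assume pS: "p \<in> S"
    have "mon \<alpha> \<in> pmvs.span (B1 \<union> T)" if a: "\<alpha> \<in> Poly_Mapping.keys p" for \<alpha>
    proof -
      have aM: "\<alpha> \<in> Mon b d" using pS a unfolding S_def S_deg_iff by blast
      obtain \<beta> where bS: "\<beta> \<in> Std b d" "xmonom \<beta> = xmonom \<alpha>" using Std_exists[OF aM] by blast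
      have bM: "\<beta> \<in> Mon b d" using bS Std_Mon by blast
      have dS: "mon \<alpha> - mon \<beta> \<in> S"
        unfolding S_def S_deg_iff using keys_diff_sub[of "mon \<alpha>" "mon \<beta>"] aM bM by (auto simp: mon_def)
      have "phi (mon \<alpha> - mon \<beta>) = 0" unfolding phi_diff phimon bS(2) by simp
      hence "mon \<alpha> - mon \<beta> \<in> S \<inter> J" using dS unfolding J_def J_ideal_def S_def S_deg_def by blast
      hence "mon \<alpha> - mon \<beta> \<in> pmvs.span (B1 \<union> T)"
        using B1(3) pmvs.span_mono[of B1 "B1 \<union> T"] by blast
      moreover have "mon \<beta> \<in> pmvs.span (B1 \<union> T)" using bS(1) unfolding T_def
        by (intro pmvs.span_base) blast
      ultimately have "(mon \<alpha> - mon \<beta>) + mon \<beta> \<in> pmvs.span (B1 \<union> T)" by (rule pmvs.span_add)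
      thus ?thesis by simp
    qed
    thus "p \<in> pmvs.span (B1 \<union> T)" using expand_in by blast
  qed
  have "card (B1 \<union> T) = pmvs.dim S"
    by (rule pmvs.basis_card_eq_dim) (use B1(1) TS spanS indep in auto)
  moreover have "card (B1 \<union> T) = card B1 + card T" using finB1 finT disj by (rule card_Un_disjoint)
  moreover have "card T = card (Std b d)" unfolding T_def using injmon by (rule card_image)
  ultimately show ?thesis using hf B1(4) by simp
qed


theorem mainTheorem10:
  fixes b :: "nat list"
  assumes pos: "\<forall>i<length b. 0 < b ! i"
  shows "init_complex b = (\<Union>u\<in>words b. face_interval b (Gu b u) (Fu b u))
    \<and> (\<forall>u\<in>words b. \<forall>u'\<in>words b. u \<noteq> u' \<longrightarrow>
          face_interval b (Gu b u) (Fu b u) \<inter> face_interval b (Gu b u') (Fu b u') = {})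
    \<and> hilbert_series TYPE('k::field) b
        = fps_of_poly (A_poly b) / (1 - fps_X) ^ (sum_list b + 1)
    \<and> (\<forall>k. coeff (A_poly b) k = of_nat (newcomb b k))"
proof -
  have h: "\<And>d. hilbert_fun TYPE('k) b d = card (Cms b d)"
    using hilbert_Std card_Std by metis
  have "hilbert_series TYPE('k::field) b = fps_of_poly (A_poly b) / (1 - fps_X) ^ (sum_list b + 1)"
    unfolding hilbert_series_def by (rule series_eq) (rule h)
  then show ?thesis using part1[of b] part2[of b] part4[of b] by blast
qed

end
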